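(* Let $F$ be a degree $d$ finite separable extension of the nonarchimedean local field $Q$, $H$ a connected reductive group over $F$, $S$ a maximal torus of $H$, $T=\mathrm{R}_{F/Q}S$, $G=\mathrm{R}_{F/Q}H$, and let $\mu\in X^+_*(T)$. Then there exists an enumeration of representatives for $W_Q/W_F$ in $W_Q$ such that, under the resulting identification $W^{\mathrm{plec}}_{F/Q}\cong W_F^d\rtimes\mathfrak S_d$, the stabilizer $W^{[\mu]}_{F/Q}$ of $\mu$ corresponds to $\prod_{j=1}^kW_{F_j}^{\delta_j}\rtimes\mathfrak S_{\delta_j}$ for some partition $\delta_1,\dots,\delta_k$ of $\{1,\dots,d\}$ and some finite separable extensions $F_1,\dots,F_k$ of $F$.
   Context: $X_*^+(T)$ (resp. $X^+_*(S)$) denotes dominant cocharacters, identified with conjugacy classes of cocharacters of $G_{\bar Q}$ (resp. $H_{\bar Q}$), with their $W_Q$- (resp. $W_F$-)actions; $X_*^+(T)$ is the $W_Q$-set induced from the $W_F$-set $X_*^+(S)$, i.e. functions $f:W_Q\to X_*^+(S)$ with $f(gh)=h^{-1}f(g)$ for $h\in W_F$. The plectic Weil group $W^{\mathrm{plec}}_{F/Q}$ is the group of bijections of $W_Q$ commuting with right multiplication by $W_F$; it contains $W_Q$ (left multiplication) and acts on $X_*^+(T)$ by $(\alpha f)(g)=f(\alpha^{-1}g)$, extending the $W_Q$-action. An enumeration $g_1,\dots,g_d$ of representatives of $W_Q/W_F$ identifies $W^{\mathrm{plec}}_{F/Q}$ with $W_F^d\rtimes\mathfrak S_d$ and $X_*^+(T)$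 with $X_*^+(S)^d$ compatibly with the natural action. $W_{F_j}\subseteq W_F$ is the Weil group of $F_j$. *)

theory Defs
  imports "HOL-Algebra.Group_Action" "HOL-Algebra.Coset"
begin

text \<open>Abstract group-theoretic model. G plays the role of the Weil group W_Q,
K the subgroup W_F (finite index d), X the W_F-set of dominant cocharacters of S.\<close>

definition plectic :: "('a, 'b) monoid_scheme \<Rightarrow> 'a set \<Rightarrow> ('a \<Rightarrow> 'a) set" where
  "plectic G K = {\<alpha>. bij_betw \<alpha> (carrier G) (carrier G) \<and>
      (\<forall>g\<in>carrier G. \<forall>h\<in>K. \<alpha> (g \<otimes>\<^bsub>G\<^esub> h) = \<alpha> g \<otimes>\<^bsub>G\<^esub> h)}"

definition induced_set ::
  "('a, 'b) monoid_scheme \<Rightarrow> 'a set \<Rightarrow> ('a \<Rightarrow> 'x \<Rightarrow> 'x) \<Rightarrow> 'x set \<Rightarrow> ('a \<Rightarrow> 'x) set" where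
  "induced_set G K act X = {f. (\<forall>g\<in>carrier G. f g \<in> X) \<and>
      (\<forall>g\<in>carrier G. \<forall>h\<in>K. f (g \<otimes>\<^bsub>G\<^esub> h) = act (inv\<^bsub>G\<^esub> h) (f g))}"

definition plec_act :: "('a, 'b) monoid_scheme \<Rightarrow> ('a \<Rightarrow> 'a) \<Rightarrow> ('a \<Rightarrow> 'x) \<Rightarrow> ('a \<Rightarrow> 'x)" where
  "plec_act G \<alpha> f = (\<lambda>g. f (inv_into (carrier G) \<alpha> g))"

definition plec_stab ::
  "('a, 'b) monoid_scheme \<Rightarrow> 'a set \<Rightarrow> ('a \<Rightarrow> 'x) \<Rightarrow> ('a \<Rightarrow> 'a) set" where
  "plec_stab G K \<mu> = {\<alpha> \<in> plectic G K. \<forall>g\<in>carrier G. plec_act G \<alpha> \<mu> g = \<mu> g}"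

definition coset_enum :: "('a, 'b) monoid_scheme \<Rightarrow> 'a set \<Rightarrow> nat \<Rightarrow> (nat \<Rightarrow> 'a) \<Rightarrow> bool" where
  "coset_enum G K d g \<longleftrightarrow> (\<forall>i<d. g i \<in> carrier G) \<and>
      (\<forall>i<d. \<forall>j<d. g i <#\<^bsub>G\<^esub> K = g j <#\<^bsub>G\<^esub> K \<longrightarrow> i = j) \<and>
      (\<forall>x\<in>carrier G. \<exists>i<d. x \<in> g i <#\<^bsub>G\<^esub> K)"

end

theory Submission
  imports Defs
begin

lemma act_facts:
  assumes G: "group WQ" and K: "subgroup WF WQ"
    and A: "group_action (WQ\<lparr>carrier := WF\<rparr>) X act"
  shows "\<And>h x. h \<in> WF \<Longrightarrow> x \<in> X \<Longrightarrow> act h x \<in> X"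
    and "\<And>h k x. h \<in> WF \<Longrightarrow> k \<in> WF \<Longrightarrow> x \<in> X \<Longrightarrow> act (h \<otimes>\<^bsub>WQ\<^esub> k) x = act h (act k x)"
    and "\<And>x. x \<in> X \<Longrightarrow> act \<one>\<^bsub>WQ\<^esub> x = x"
    and "\<And>h x. h \<in> WF \<Longrightarrow> x \<in> X \<Longrightarrow> act (inv\<^bsub>WQ\<^esub> h) (act h x) = x"
    and "\<And>h x. h \<in> WF \<Longrightarrow> x \<in> X \<Longrightarrow> act h (act (inv\<^bsub>WQ\<^esub> h) x) = x"
proof -
  show 1: "\<And>h x. h \<in> WF \<Longrightarrow> x \<in> X \<Longrightarrow> act h x \<in> X"
    using group_action.element_image[OF A] by simp
  show 2: "\<And>h k x. h \<in> WF \<Longrightarrow> k \<in> WF \<Longrightarrow> x \<in> X \<Longrightarrow> act (h \<otimes>\<^bsub>WQ\<^esub> k) x = act h (act k x)"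
    using group_action.composition_rule[OF A] by simp
  show 3: "\<And>x. x \<in> X \<Longrightarrow> act \<one>\<^bsub>WQ\<^esub> x = x"
  proof -
    fix x assume "x \<in> X"
    have "(\<lambda>x\<in>X. x) = act \<one>\<^bsub>WQ\<lparr>carrier := WF\<rparr>\<^esub>" using group_action.id_eq_one[OF A] .
    from fun_cong[OF this, of x] show "act \<one>\<^bsub>WQ\<^esub> x = x" using \<open>x \<in> X\<close> by simp
  qed
  have inv: "\<And>h. h \<in> WF \<Longrightarrow> inv\<^bsub>WQ\<^esub> h \<in> WF" by (rule subgroup.m_inv_closed[OF K])
  have sub: "\<And>h. h \<in> WF \<Longrightarrow> h \<in> carrier WQ" by (rule subgroup.mem_carrier[OF K])
  show "\<And>h x. h \<in> WF \<Longrightarrow> x \<in> X \<Longrightarrow> act (inv\<^bsub>WQ\<^esub> h) (act h x) = x"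
  proof -
    fix h x assume h: "h \<in> WF" and x: "x \<in> X"
    have "act (inv\<^bsub>WQ\<^esub> h) (act h x) = act (inv\<^bsub>WQ\<^esub> h \<otimes>\<^bsub>WQ\<^esub> h) x"
      using 2[OF inv[OF h] h x] by (rule sym)
    also have "\<dots> = x" by (simp only: group.l_inv[OF G sub[OF h]] 3[OF x])
    finally show "act (inv\<^bsub>WQ\<^esub> h) (act h x) = x" .
  qed
  show "\<And>h x. h \<in> WF \<Longrightarrow> x \<in> X \<Longrightarrow> act h (act (inv\<^bsub>WQ\<^esub> h) x) = x"
  proof -
    fix h x assume h: "h \<in> WF" and x: "x \<in> X"
    have "act h (act (inv\<^bsub>WQ\<^esub> h) x) = act (h \<otimes>\<^bsub>WQ\<^esub> inv\<^bsub>WQ\<^esub> h) x"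
      using 2[OF h inv[OF h] x] by (rule sym)
    also have "\<dots> = x" by (simp only: group.r_inv[OF G sub[OF h]] 3[OF x])
    finally show "act h (act (inv\<^bsub>WQ\<^esub> h) x) = x" .
  qed
qed

theorem proposition4p2:
  fixes WQ :: "('a, 'b) monoid_scheme"
    and WF :: "'a set" and N :: "'a set"
    and X :: "'x set" and act :: "'a \<Rightarrow> 'x \<Rightarrow> 'x"
    and d :: nat and \<mu> :: "'a \<Rightarrow> 'x"
  assumes "group WQ"
    and "subgroup WF WQ"
    and "finite ((\<lambda>a. a <#\<^bsub>WQ\<^esub> WF) ` carrier WQ)"
    and "d = card ((\<lambda>a. a <#\<^bsub>WQ\<^esub> WF) ` carrier WQ)"
    and "group_action (WQ\<lparr>carrier := WF\<rparr>) X act"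
    and "N \<lhd> WQ\<lparr>carrier := WF\<rparr>"
    and "finite (rcosets\<^bsub>WQ\<lparr>carrier := WF\<rparr>\<^esub> N)"
    and "\<forall>n\<in>N. \<forall>x\<in>X. act n x = x"
    and "\<mu> \<in> induced_set WQ WF act X"
  shows "\<exists>g k (\<delta> :: nat \<Rightarrow> nat set) (W :: nat \<Rightarrow> 'a set).
           coset_enum WQ WF d g \<and>
           (\<forall>j<k. \<delta> j \<noteq> {}) \<and>
           (\<forall>j<k. \<forall>j'<k. j \<noteq> j' \<longrightarrow> \<delta> j \<inter> \<delta> j' = {}) \<and>
           (\<Union>j<k. \<delta> j) = {..<d} \<and>
           (\<forall>j<k. subgroup (W j) (WQ\<lparr>carrier := WF\<rparr>) \<and> N \<subseteq> W j) \<and>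
           (\<forall>\<alpha>\<in>plectic WQ WF.
              \<alpha> \<in> plec_stab WQ WF \<mu> \<longleftrightarrow>
              (\<forall>j<k. \<forall>i\<in>\<delta> j. \<exists>i'\<in>\<delta> j. \<exists>h\<in>W j. \<alpha> (g i) = g i' \<otimes>\<^bsub>WQ\<^esub> h))"
proof -
  interpret G: group WQ by fact
  note K = assms(2)
  note A = assms(5)
  note AF = act_facts[OF assms(1,2,5)]
  have subK: "\<And>h. h \<in> WF \<Longrightarrow> h \<in> carrier WQ" by (rule subgroup.mem_carrier[OF K])
  have invK: "\<And>h. h \<in> WF \<Longrightarrow> inv\<^bsub>WQ\<^esub> h \<in> WF" by (rule subgroup.m_inv_closed[OF K])
  have oneK: "\<one>\<^bsub>WQ\<^esub> \<in> WF" by (rule subgroup.one_closed[OF K])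
  have multK: "\<And>h k. h \<in> WF \<Longrightarrow> k \<in> WF \<Longrightarrow> h \<otimes>\<^bsub>WQ\<^esub> k \<in> WF" by (rule subgroup.m_closed[OF K])
  have mu_X: "\<And>a. a \<in> carrier WQ \<Longrightarrow> \<mu> a \<in> X" using assms(9) unfolding induced_set_def by blast
  have mu_mult: "\<And>a h. a \<in> carrier WQ \<Longrightarrow> h \<in> WF \<Longrightarrow> \<mu> (a \<otimes>\<^bsub>WQ\<^esub> h) = act (inv\<^bsub>WQ\<^esub> h) (\<mu> a)"
    using assms(9) unfolding induced_set_def by blast
  define C where "C = (\<lambda>a. a <#\<^bsub>WQ\<^esub> WF) ` carrier WQ"
  obtain e where e: "bij_betw e {0..<d} C" using ex_bij_betw_nat_finite assms(3,4) unfolding C_def by blast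
  define orb where "orb x = {act h x | h. h \<in> WF}" for x
  define canon where "canon x = (SOME y. y \<in> orb x)" for x
  have orb_self: "\<And>x. x \<in> X \<Longrightarrow> x \<in> orb x"
    unfolding orb_def using oneK AF(3) by force
  have orb_eq: "\<And>x y. x \<in> X \<Longrightarrow> y \<in> orb x \<Longrightarrow> orb y = orb x"
  proof -
    fix x y assume x: "x \<in> X" and y: "y \<in> orb x"
    then obtain h where h: "h \<in> WF" "y = act h x" unfolding orb_def by blast
    show "orb y = orb x"
    proof
      show "orb y \<subseteq> orb x"
      proof
        fix z assume "z \<in> orb y"
        then obtain k where k: "k \<in> WF" "z = act k y" unfolding orb_def by blast
        then have "z = act (k \<otimes>\<^bsub>WQ\<^esub> h) x" using AF(2)[OF k(1) h(1) x] h by simp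
        then show "z \<in> orb x" unfolding orb_def using multK[OF k(1) h(1)] by blast
      qed
      show "orb x \<subseteq> orb y"
      proof
        fix z assume "z \<in> orb x"
        then obtain k where k: "k \<in> WF" "z = act k x" unfolding orb_def by blast
        have "act (k \<otimes>\<^bsub>WQ\<^esub> inv\<^bsub>WQ\<^esub> h) y = act k (act (inv\<^bsub>WQ\<^esub> h) (act h x))"
          using AF(2)[OF k(1) invK[OF h(1)]] AF(1)[OF h(1) x] h by simp
        also have "\<dots> = z" using AF(4)[OF h(1) x] k by simp
        finally show "z \<in> orb y" unfolding orb_def using multK[OF k(1) invK[OF h(1)]] by blast
      qed
    qed
  qed
  have canon_in: "\<And>x. x \<in> X \<Longrightarrow> canon x \<in> orb x"
    unfolding canon_def using orb_self by (meson someI)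
  have ex_rep: "\<And>c. c \<in> C \<Longrightarrow> \<exists>b. b \<in> c \<and> \<mu> b = canon (\<mu> b)"
  proof -
    fix c assume "c \<in> C"
    then obtain a where a: "a \<in> carrier WQ" "c = a <#\<^bsub>WQ\<^esub> WF" unfolding C_def by blast
    have "canon (\<mu> a) \<in> orb (\<mu> a)" using canon_in mu_X[OF a(1)] .
    then obtain h where h: "h \<in> WF" "canon (\<mu> a) = act h (\<mu> a)" unfolding orb_def by blast
    define b where "b = a \<otimes>\<^bsub>WQ\<^esub> inv\<^bsub>WQ\<^esub> h"
    have "b \<in> c" unfolding a b_def l_coset_def using invK[OF h(1)] by blast
    moreover have mb: "\<mu> b = canon (\<mu> a)"
      unfolding b_def using mu_mult[OF a(1) invK[OF h(1)]] h subK[OF h(1)] by simp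
    moreover have "orb (\<mu> b) = orb (\<mu> a)"
      using orb_eq[OF mu_X[OF a(1)]] mb canon_in[OF mu_X[OF a(1)]] by simp
    ultimately show "\<exists>b. b \<in> c \<and> \<mu> b = canon (\<mu> b)" unfolding canon_def by metis
  qed
  define g where "g i = (SOME b. b \<in> e i \<and> \<mu> b = canon (\<mu> b))" for i
  have e_in: "\<And>i. i < d \<Longrightarrow> e i \<in> C" using e unfolding bij_betw_def by auto
  have g_prop: "\<And>i. i < d \<Longrightarrow> g i \<in> e i \<and> \<mu> (g i) = canon (\<mu> (g i))"
  proof -
    fix i assume "i < d"
    then have "\<exists>b. b \<in> e i \<and> \<mu> b = canon (\<mu> b)" using ex_rep[OF e_in] by simp
    then show "g i \<in> e i \<and> \<mu> (g i) = canon (\<mu> (g i))" unfolding g_def by (rule someI_ex)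
  qed
  have g_G: "\<And>i. i < d \<Longrightarrow> g i \<in> carrier WQ"
  proof -
    fix i assume i: "i < d"
    then obtain a where a: "a \<in> carrier WQ" "e i = a <#\<^bsub>WQ\<^esub> WF" using e_in unfolding C_def by blast
    show "g i \<in> carrier WQ" using g_prop[OF i] a G.l_coset_subset_G[OF subgroup.subset[OF K] a(1)] by blast
  qed
  have g_cos: "\<And>i. i < d \<Longrightarrow> g i <#\<^bsub>WQ\<^esub> WF = e i"
  proof -
    fix i assume i: "i < d"
    then obtain a where a: "a \<in> carrier WQ" "e i = a <#\<^bsub>WQ\<^esub> WF" using e_in unfolding C_def by blast
    show "g i <#\<^bsub>WQ\<^esub> WF = e i" using G.l_repr_independence[OF _ a(1) K, of "g i"] g_prop[OF i] a by simp
  qed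
  have self_cos: "\<And>a. a \<in> carrier WQ \<Longrightarrow> a \<in> a <#\<^bsub>WQ\<^esub> WF"
    unfolding l_coset_def using oneK by force
  have enum: "coset_enum WQ WF d g"
    unfolding coset_enum_def
  proof (intro conjI allI ballI impI)
    show "\<And>i. i < d \<Longrightarrow> g i \<in> carrier WQ" by (rule g_G)
    show "\<And>i j. i < d \<Longrightarrow> j < d \<Longrightarrow> g i <#\<^bsub>WQ\<^esub> WF = g j <#\<^bsub>WQ\<^esub> WF \<Longrightarrow> i = j"
      using g_cos e unfolding bij_betw_def inj_on_def by auto
    fix x assume x: "x \<in> carrier WQ"
    then have "x <#\<^bsub>WQ\<^esub> WF \<in> e ` {0..<d}" using e unfolding bij_betw_def C_def by auto
    then obtain i where "i < d" "x <#\<^bsub>WQ\<^esub> WF = e i" by auto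
    then show "\<exists>i<d. x \<in> g i <#\<^bsub>WQ\<^esub> WF" using g_cos self_cos[OF x] by metis
  qed
  have cos_dec: "\<And>x. x \<in> carrier WQ \<Longrightarrow> \<exists>i<d. \<exists>h\<in>WF. x = g i \<otimes>\<^bsub>WQ\<^esub> h"
    using enum unfolding coset_enum_def l_coset_def by blast
  define Cl where "Cl = (\<lambda>i. \<mu> (g i)) ` {..<d}"
  have "finite Cl" unfolding Cl_def by simp
  then obtain f where f: "bij_betw f {0..<card Cl} Cl" using ex_bij_betw_nat_finite by blast
  define \<delta> where "\<delta> j = {i. i < d \<and> \<mu> (g i) = f j}" for j
  define W where "W j = {h \<in> WF. act h (f j) = f j}" for j
  have f_in: "\<And>j. j < card Cl \<Longrightarrow> f j \<in> Cl" using f unfolding bij_betw_def by auto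
  have f_X: "\<And>j. j < card Cl \<Longrightarrow> f j \<in> X"
  proof -
    fix j assume "j < card Cl"
    then obtain i where "i < d" "f j = \<mu> (g i)" using f_in unfolding Cl_def by auto
    then show "f j \<in> X" using mu_X g_G by simp
  qed
  have canon_eq: "\<And>i i' h. i < d \<Longrightarrow> i' < d \<Longrightarrow> h \<in> WF \<Longrightarrow> \<mu> (g i) = act h (\<mu> (g i')) \<Longrightarrow> \<mu> (g i) = \<mu> (g i')"
  proof -
    fix i i' h assume i: "i < d" and i': "i' < d" and h: "h \<in> WF" and eq: "\<mu> (g i) = act h (\<mu> (g i'))"
    have "\<mu> (g i) \<in> orb (\<mu> (g i'))" unfolding orb_def using eq h by blast
    then have "orb (\<mu> (g i)) = orb (\<mu> (g i'))" using orb_eq mu_X g_G i' by blast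
    then show "\<mu> (g i) = \<mu> (g i')" using g_prop[OF i] g_prop[OF i'] unfolding canon_def by metis
  qed
  have stab_iff: "\<And>\<alpha>. \<alpha> \<in> plectic WQ WF \<Longrightarrow> \<alpha> \<in> plec_stab WQ WF \<mu> \<longleftrightarrow> (\<forall>a\<in>carrier WQ. \<mu> (\<alpha> a) = \<mu> a)"
  proof -
    fix \<alpha> assume pa: "\<alpha> \<in> plectic WQ WF"
    then have bij: "bij_betw \<alpha> (carrier WQ) (carrier WQ)" unfolding plectic_def by blast
    show "\<alpha> \<in> plec_stab WQ WF \<mu> \<longleftrightarrow> (\<forall>a\<in>carrier WQ. \<mu> (\<alpha> a) = \<mu> a)"
    proof
      assume st: "\<alpha> \<in> plec_stab WQ WF \<mu>"
      show "\<forall>a\<in>carrier WQ. \<mu> (\<alpha> a) = \<mu> a"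
      proof
        fix a assume a: "a \<in> carrier WQ"
        have aa: "\<alpha> a \<in> carrier WQ" using bij a unfolding bij_betw_def by auto
        have "inv_into (carrier WQ) \<alpha> (\<alpha> a) = a" using bij a by (simp add: bij_betw_def inv_into_f_f)
        then show "\<mu> (\<alpha> a) = \<mu> a" using st aa unfolding plec_stab_def plec_act_def by force
      qed
    next
      assume H: "\<forall>a\<in>carrier WQ. \<mu> (\<alpha> a) = \<mu> a"
      show "\<alpha> \<in> plec_stab WQ WF \<mu>" unfolding plec_stab_def plec_act_def
      proof (intro CollectI conjI ballI pa)
        fix x assume x: "x \<in> carrier WQ"
        then have x': "x \<in> \<alpha> ` carrier WQ" using bij unfolding bij_betw_def by auto
        have "inv_into (carrier WQ) \<alpha> x \<in> carrier WQ" using inv_into_into[OF x'] .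
        moreover have "\<alpha> (inv_into (carrier WQ) \<alpha> x) = x" using f_inv_into_f[OF x'] .
        ultimately show "\<mu> (inv_into (carrier WQ) \<alpha> x) = \<mu> x" using H by metis
      qed
    qed
  qed
  show ?thesis
  proof (intro exI conjI)
    show "coset_enum WQ WF d g" by (rule enum)
    show "\<forall>j<card Cl. \<delta> j \<noteq> {}"
    proof (intro allI impI)
      fix j assume "j < card Cl"
      then obtain i where "i < d" "f j = \<mu> (g i)" using f_in unfolding Cl_def by auto
      then show "\<delta> j \<noteq> {}" unfolding \<delta>_def by auto
    qed
    show "\<forall>j<card Cl. \<forall>j'<card Cl. j \<noteq> j' \<longrightarrow> \<delta> j \<inter> \<delta> j' = {}"
      using f unfolding bij_betw_def inj_on_def \<delta>_def by auto
    show "(\<Union>j<card Cl. \<delta> j) = {..<d}"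
    proof
      show "(\<Union>j<card Cl. \<delta> j) \<subseteq> {..<d}" unfolding \<delta>_def by auto
      show "{..<d} \<subseteq> (\<Union>j<card Cl. \<delta> j)"
      proof
        fix i assume "i \<in> {..<d}"
        then have "\<mu> (g i) \<in> f ` {0..<card Cl}" using f unfolding bij_betw_def Cl_def by auto
        then show "i \<in> (\<Union>j<card Cl. \<delta> j)" using \<open>i \<in> {..<d}\<close> unfolding \<delta>_def by auto
      qed
    qed
    show "\<forall>j<card Cl. subgroup (W j) (WQ\<lparr>carrier := WF\<rparr>) \<and> N \<subseteq> W j"
    proof (intro allI impI conjI)
      fix j assume j: "j < card Cl"
      have "W j = stabilizer (WQ\<lparr>carrier := WF\<rparr>) act (f j)"
        unfolding W_def stabilizer_def by simp
      then show "subgroup (W j) (WQ\<lparr>carrier := WF\<rparr>)"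
        using group_action.stabilizer_subgroup[OF A f_X[OF j]] by simp
      have "N \<subseteq> WF" using subgroup.subset[OF normal_imp_subgroup[OF assms(6)]] by simp
      then show "N \<subseteq> W j" unfolding W_def using assms(8) f_X[OF j] by auto
    qed
    show "\<forall>\<alpha>\<in>plectic WQ WF. \<alpha> \<in> plec_stab WQ WF \<mu> \<longleftrightarrow>
              (\<forall>j<card Cl. \<forall>i\<in>\<delta> j. \<exists>i'\<in>\<delta> j. \<exists>h\<in>W j. \<alpha> (g i) = g i' \<otimes>\<^bsub>WQ\<^esub> h)"
    proof
      fix \<alpha> assume pa: "\<alpha> \<in> plectic WQ WF"
      have bij: "bij_betw \<alpha> (carrier WQ) (carrier WQ)" using pa unfolding plectic_def by blast
      have comm: "\<And>a h. a \<in> carrier WQ \<Longrightarrow> h \<in> WF \<Longrightarrow> \<alpha> (a \<otimes>\<^bsub>WQ\<^esub> h) = \<alpha> a \<otimes>\<^bsub>WQ\<^esub> h"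
        using pa unfolding plectic_def by blast
      have aG: "\<And>a. a \<in> carrier WQ \<Longrightarrow> \<alpha> a \<in> carrier WQ" using bij unfolding bij_betw_def by auto
      show "\<alpha> \<in> plec_stab WQ WF \<mu> \<longleftrightarrow>
              (\<forall>j<card Cl. \<forall>i\<in>\<delta> j. \<exists>i'\<in>\<delta> j. \<exists>h\<in>W j. \<alpha> (g i) = g i' \<otimes>\<^bsub>WQ\<^esub> h)"
        unfolding stab_iff[OF pa]
      proof
        assume H: "\<forall>a\<in>carrier WQ. \<mu> (\<alpha> a) = \<mu> a"
        show "\<forall>j<card Cl. \<forall>i\<in>\<delta> j. \<exists>i'\<in>\<delta> j. \<exists>h\<in>W j. \<alpha> (g i) = g i' \<otimes>\<^bsub>WQ\<^esub> h"
        proof (intro allI impI ballI)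
          fix j i assume j: "j < card Cl" and i: "i \<in> \<delta> j"
          then have id: "i < d" "\<mu> (g i) = f j" unfolding \<delta>_def by auto
          obtain i' h where i': "i' < d" and h: "h \<in> WF" and eq: "\<alpha> (g i) = g i' \<otimes>\<^bsub>WQ\<^esub> h"
            using cos_dec[OF aG[OF g_G[OF id(1)]]] by blast
          have m: "\<mu> (g i) = act (inv\<^bsub>WQ\<^esub> h) (\<mu> (g i'))"
            using H g_G[OF id(1)] eq mu_mult[OF g_G[OF i'] h] by metis
          then have "\<mu> (g i) = \<mu> (g i')" using canon_eq[OF id(1) i' invK[OF h]] by blast
          then have i'd: "i' \<in> \<delta> j" unfolding \<delta>_def using i' id by simp
          have "act (inv\<^bsub>WQ\<^esub> h) (f j) = f j" using m id \<open>\<mu> (g i) = \<mu> (g i')\<close> by simp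
          then have "act h (f j) = f j" using AF(5)[OF h f_X[OF j]] by simp
          then have "h \<in> W j" unfolding W_def using h by simp
          then show "\<exists>i'\<in>\<delta> j. \<exists>h\<in>W j. \<alpha> (g i) = g i' \<otimes>\<^bsub>WQ\<^esub> h" using i'd eq by blast
        qed
      next
        assume H: "\<forall>j<card Cl. \<forall>i\<in>\<delta> j. \<exists>i'\<in>\<delta> j. \<exists>h\<in>W j. \<alpha> (g i) = g i' \<otimes>\<^bsub>WQ\<^esub> h"
        show "\<forall>a\<in>carrier WQ. \<mu> (\<alpha> a) = \<mu> a"
        proof
          fix a assume a: "a \<in> carrier WQ"
          obtain i k where i: "i < d" and k: "k \<in> WF" and ak: "a = g i \<otimes>\<^bsub>WQ\<^esub> k"
            using cos_dec[OF a] by blast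
          have "\<mu> (g i) \<in> f ` {0..<card Cl}" using f i unfolding bij_betw_def Cl_def by auto
          then obtain j where j: "j < card Cl" and fj: "f j = \<mu> (g i)" by auto
          have "i \<in> \<delta> j" unfolding \<delta>_def using i fj by simp
          then obtain i' h where i': "i' \<in> \<delta> j" and h: "h \<in> W j" and eq: "\<alpha> (g i) = g i' \<otimes>\<^bsub>WQ\<^esub> h"
            using H j by blast
          have hK: "h \<in> WF" and hf: "act h (f j) = f j" using h unfolding W_def by auto
          have i'd: "i' < d" "\<mu> (g i') = f j" using i' unfolding \<delta>_def by auto
          have "\<alpha> a = \<alpha> (g i) \<otimes>\<^bsub>WQ\<^esub> k" using comm[OF g_G[OF i] k] ak by simp
          also have "\<dots> = g i' \<otimes>\<^bsub>WQ\<^esub> (h \<otimes>\<^bsub>WQ\<^esub> k)" using eq G.m_assoc g_G[OF i'd(1)] subK hK k by simp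
          finally have "\<mu> (\<alpha> a) = act (inv\<^bsub>WQ\<^esub> (h \<otimes>\<^bsub>WQ\<^esub> k)) (f j)"
            using mu_mult[OF g_G[OF i'd(1)] multK[OF hK k]] i'd by simp
          also have "\<dots> = act (inv\<^bsub>WQ\<^esub> k \<otimes>\<^bsub>WQ\<^esub> inv\<^bsub>WQ\<^esub> h) (f j)"
            using G.inv_mult_group subK hK k by simp
          also have "\<dots> = act (inv\<^bsub>WQ\<^esub> k) (act (inv\<^bsub>WQ\<^esub> h) (f j))"
            using AF(2)[OF invK[OF k] invK[OF hK] f_X[OF j]] .
          also have "act (inv\<^bsub>WQ\<^esub> h) (f j) = f j" using AF(4)[OF hK f_X[OF j]] hf by simp
          also have "act (inv\<^bsub>WQ\<^esub> k) (f j) = \<mu> a" using mu_mult[OF g_G[OF i] k] ak fj by simp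
          finally show "\<mu> (\<alpha> a) = \<mu> a" .
        qed
      qed
    qed
  qed
qed

end
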